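(* Let $f \in \mathbb{N}_0[x^{\pm 1}]$ be such that $f(1) = p + q$ for some prime numbers $p$ and $q$. Then $f$ can be written as the sum of two irreducible elements of $\mathbb{N}_0[x^{\pm 1}]$.
   Context: $\mathbb{N}_0[x^{\pm 1}]$ denotes the semiring of Laurent polynomials in $x$ with nonnegative integer coefficients. Its units are exactly the monomials $x^k$, $k \in \mathbb{Z}$. An element $f$ is irreducible if it is nonzero, not a unit, and whenever $f = gh$ with $g,h \in \mathbb{N}_0[x^{\pm 1}]$, one of $g,h$ is a unit. *)

theory Defs
  imports "HOL-Library.Poly_Mapping" "HOL-Computational_Algebra.Factorial_Ring"
    "HOL-Computational_Algebra.Primes"
begin

text \<open>The semiring N0[x^{+-1}] of Laurent polynomials with nonnegative integer
  coefficients: finitely supported maps from exponents (int) to coefficients (nat),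
  with convolution product (library instance comm_semiring_1).\<close>
type_synonym laurent_nat = "int \<Rightarrow>\<^sub>0 nat"

definition eval_at_one :: "laurent_nat \<Rightarrow> nat" where
  "eval_at_one f = (\<Sum>k\<in>Poly_Mapping.keys f. Poly_Mapping.lookup f k)"

end

theory Submission
  imports Defs
begin

lemma ev_sum: "finite S \<Longrightarrow> Poly_Mapping.keys f \<subseteq> S \<Longrightarrow>
   eval_at_one f = (\<Sum>k\<in>S. Poly_Mapping.lookup f k)"
  unfolding eval_at_one_def
  by (rule sum.mono_neutral_left) (auto simp: in_keys_iff)

lemma ev_add: "eval_at_one (f + g) = eval_at_one f + eval_at_one g"
proof -
  let ?S = "Poly_Mapping.keys f \<union> Poly_Mapping.keys g"
  have "eval_at_one (f + g) = (\<Sum>k\<in>?S. Poly_Mapping.lookup (f+g) k)"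
    using keys_add[of f g] by (intro ev_sum) auto
  also have "\<dots> = (\<Sum>k\<in>?S. Poly_Mapping.lookup f k) + (\<Sum>k\<in>?S. Poly_Mapping.lookup g k)"
    by (simp add: lookup_add sum.distrib)
  also have "\<dots> = eval_at_one f + eval_at_one g"
    using ev_sum[of ?S f] ev_sum[of ?S g] by simp
  finally show ?thesis .
qed

lemma ev_single: "eval_at_one (Poly_Mapping.single k (v::nat)) = v"
  by (cases "v = 0") (auto simp: eval_at_one_def)

lemma ev_zero: "eval_at_one 0 = 0"
  by (simp add: eval_at_one_def)

lemma upd_eq: "a \<notin> Poly_Mapping.keys f \<Longrightarrow> Poly_Mapping.update a b f = f + Poly_Mapping.single a b"
  by (rule poly_mapping_eqI) (auto simp: lookup_update lookup_add lookup_single in_keys_iff when_def)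

lemma ev_single_mult: "eval_at_one (Poly_Mapping.single a (b::nat) * (g::laurent_nat)) = b * eval_at_one g"
proof (induction g rule: update_induct)
  case const
  then show ?case by (simp add: ev_zero)
next
  case (update g c d)
  then show ?case
    by (simp add: upd_eq distrib_left ev_add mult_single ev_single)
qed

lemma ev_mult: "eval_at_one ((f::laurent_nat) * g) = eval_at_one f * eval_at_one g"
proof (induction f rule: update_induct)
  case const
  then show ?case by (simp add: ev_zero)
next
  case (update f c d)
  then show ?case
    by (simp add: upd_eq distrib_right ev_add ev_single_mult ev_single)
qed

lemma ev_split: "n \<le> eval_at_one (f::laurent_nat) \<Longrightarrow> \<exists>g h. f = g + h \<and> eval_at_one g = n"
proof (induction f arbitrary: n rule: update_induct)
  case const
  then show ?case by (intro exI[of _ 0]) (simp add: ev_zero)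
next
  case (update f a b)
  then have "n \<le> eval_at_one f + b" by (simp add: upd_eq ev_add ev_single)
  show ?case
  proof (cases "n \<le> eval_at_one f")
    case True
    with update obtain g h where "f = g + h" "eval_at_one g = n" by blast
    then show ?thesis using update
      by (intro exI[of _ g] exI[of _ "h + Poly_Mapping.single a b"]) (simp add: upd_eq add.assoc)
  next
    case False
    define m where "m = n - eval_at_one f"
    have m: "m \<le> b" "n = eval_at_one f + m" using False \<open>n \<le> eval_at_one f + b\<close> by (auto simp: m_def)
    have "Poly_Mapping.single a b = Poly_Mapping.single a m + Poly_Mapping.single a (b - m)"
      using m by (simp add: single_add[symmetric])
    then show ?thesis using update m
      by (intro exI[of _ "f + Poly_Mapping.single a m"] exI[of _ "Poly_Mapping.single a (b - m)"])
         (simp add: upd_eq add.assoc ev_add ev_single)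
  qed
qed

lemma ev_one_unit: assumes "eval_at_one (a::laurent_nat) = 1" shows "a dvd 1"
proof -
  have "Poly_Mapping.keys a \<noteq> {}" using assms by (auto simp: eval_at_one_def)
  then obtain k where k: "k \<in> Poly_Mapping.keys a" by blast
  have fin: "finite (Poly_Mapping.keys a)" by simp
  have "Poly_Mapping.lookup a k + (\<Sum>j\<in>Poly_Mapping.keys a - {k}. Poly_Mapping.lookup a j) = 1"
    using assms k fin unfolding eval_at_one_def by (simp add: sum.remove)
  moreover have "Poly_Mapping.lookup a k > 0" using k by (simp add: in_keys_iff)
  ultimately have lk: "Poly_Mapping.lookup a k = 1"
    and rest: "(\<Sum>j\<in>Poly_Mapping.keys a - {k}. Poly_Mapping.lookup a j) = 0" by linarith+
  have "\<forall>j\<in>Poly_Mapping.keys a - {k}. Poly_Mapping.lookup a j = 0"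
    using rest fin by simp
  then have "Poly_Mapping.keys a - {k} = {}" by (auto simp: in_keys_iff)
  then have "a = Poly_Mapping.single k 1"
    using lk by (intro poly_mapping_eqI) (auto simp: lookup_single when_def in_keys_iff)
  then have "a * Poly_Mapping.single (-k) 1 = Poly_Mapping.single 0 1"
    by (simp add: mult_single)
  then have "a * Poly_Mapping.single (-k) 1 = 1"
    by (simp only: single_one)
  then show ?thesis by (metis dvdI)
qed

lemma prime_irred: assumes "prime (eval_at_one (g::laurent_nat))" shows "irreducible g"
proof -
  have "g \<noteq> 0" using assms by (auto simp: ev_zero)
  moreover have "\<not> g dvd 1"
  proof
    assume "g dvd 1"
    then obtain u where "1 = g * u" by (auto elim: dvdE)
    then have "eval_at_one g * eval_at_one u = 1" by (metis ev_mult ev_single single_one)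
    then show False using assms by simp
  qed
  moreover have "a dvd 1 \<or> b dvd 1" if "g = a * b" for a b
  proof -
    have "prime (eval_at_one a * eval_at_one b)" using assms that by (simp add: ev_mult)
    then have "eval_at_one a = 1 \<or> eval_at_one b = 1"
      by (metis prime_product)
    then show ?thesis using ev_one_unit by blast
  qed
  ultimately show ?thesis unfolding irreducible_def by blast
qed

theorem corollary2p2:
  fixes f :: laurent_nat and p q :: nat
  assumes "prime p" and "prime q" and "eval_at_one f = p + q"
  shows "\<exists>g h :: laurent_nat. irreducible g \<and> irreducible h \<and> f = g + h"
proof -
  obtain g h where gh: "f = g + h" "eval_at_one g = p" using ev_split[of p f] assms(3) by auto
  then have "eval_at_one h = q" using assms(3) by (simp add: ev_add)
  then show ?thesis using gh assms prime_irred by metis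
qed

end
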